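(* Let $\lambda^*(q,K,C)$ denote the critical virality weight for story precision $q\in(1/2,1)$, news-feed size $K$, and capacity $C$ (considering only admissible triples, with integers $1\le C\le K/2$). Then: (i) $\lambda^*(q',K,C)\ge\lambda^*(q,K,C)$ if $q'>q$; (ii) $\lambda^*(q,K,C')\ge\lambda^*(q,K,C)$ if $C'<C$; (iii) $\lambda^*(q,K-2,C)\ge\lambda^*(q,K,C)$ for every $K$; (iv) $\lambda^*(q,K+1,C)\ge\lambda^*(q,K,C)$ if $K$ is odd; (v) $\lambda^*(q,K-1,C)\ge\lambda^*(q,K,C)$ if $K$ is odd. All of these inequalities are strict whenever $\lambda^*(q,K,C)$ is finite.
   Context: For parameters $q\in(1/2,1)$, integers $K\ge1$, $1\le C\le K/2$, and $\lambda\in[0,1]$, let $P_k(x,\lambda)=\mathbb{P}[\mathrm{Binom}(K,\lambda x+(1-\lambda)q)=k]$ for $x\in[0,1]$, and define the majority-rule inflow accuracy function $$\phi_{\sigma^{\mathrm{maj}}}(x)=\frac{q+C\sum_{k>K/2}P_k(x,\lambda)+qC\,P_{K/2}(x,\lambda)}{1+C},$$ where the term $P_{K/2}$ is present only when $K$ is even. (This is the expected fraction of new popularity score going to correct stories when agents, who share $C$ feed stories and post their own story of precision $q$, use the majority rule: share $C$ stories of the feed majority, breaking ties in favor of the own story.) The critical virality weight is $\lambda^*(q,K,C)=\inf\{\lambda\in[0,1]:\phi_{\sigma^{\mathrm{maj}}}(x)=x\text{ for some }x\in[0,1/2]\}$, with $\lambda^*=\infty$ if this set is empty. *)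

theory Defs
  imports "HOL-Analysis.Analysis" "HOL-Library.Extended_Real"
begin

definition Pk :: "real \<Rightarrow> nat \<Rightarrow> nat \<Rightarrow> real \<Rightarrow> real \<Rightarrow> real" where
  "Pk q K k lam x =
     (let p = lam * x + (1 - lam) * q in real (K choose k) * p ^ k * (1 - p) ^ (K - k))"

definition phi_maj :: "real \<Rightarrow> nat \<Rightarrow> nat \<Rightarrow> real \<Rightarrow> real \<Rightarrow> real" where
  "phi_maj q K C lam x =
     (q + real C * (\<Sum>k\<in>{k. K < 2 * k \<and> k \<le> K}. Pk q K k lam x)
        + (if even K then q * real C * Pk q K (K div 2) lam x else 0))
     / (1 + real C)"

definition lamstar :: "real \<Rightarrow> nat \<Rightarrow> nat \<Rightarrow> ereal" where
  "lamstar q K C =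
     (let S = {lam \<in> {0..1}. \<exists>x\<in>{0..1/2}. phi_maj q K C lam x = x}
      in if S = {} then \<infinity> else ereal (Inf S))"

end

theory Submission
  imports Defs
begin

definition bn :: "nat \<Rightarrow> nat \<Rightarrow> real \<Rightarrow> real" where
  "bn n k p = real (n choose k) * p ^ k * (1 - p) ^ (n - k)"

definition Tl :: "nat \<Rightarrow> nat \<Rightarrow> real \<Rightarrow> real" where
  "Tl n j p = (\<Sum>k=j..n. bn n k p)"

lemma bn_gt: "n < k \<Longrightarrow> bn n k p = 0"
  by (simp add: bn_def)

lemma bn_nonneg: "0 \<le> p \<Longrightarrow> p \<le> 1 \<Longrightarrow> 0 \<le> bn n k p"
  by (simp add: bn_def)

lemma bn_pos: "0 < p \<Longrightarrow> p < 1 \<Longrightarrow> k \<le> n \<Longrightarrow> 0 < bn n k p"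
  by (simp add: bn_def)

lemma bn_Suc: "bn (Suc n) (Suc k) p = p * bn n k p + (1 - p) * bn n (Suc k) p"
proof (cases "k < n")
  case True
  then obtain d where d: "n = Suc (k + d)" using less_iff_Suc_add by auto
  show ?thesis unfolding bn_def binomial_Suc_Suc of_nat_add d
    by (simp add: algebra_simps)
next
  case False
  show ?thesis
  proof (cases "k = n")
    case True
    then show ?thesis by (simp add: bn_def)
  next
    case False
    with \<open>\<not> k < n\<close> have "n < k" by simp
    then show ?thesis by (simp add: bn_def binomial_eq_0)
  qed
qed

lemma bn_Suc0: "bn (Suc n) 0 p = (1 - p) * bn n 0 p"
  by (simp add: bn_def)

lemma Tl_step: "Tl n j p = bn n j p + Tl n (Suc j) p"
proof (cases "j \<le> n")
  case True
  then show ?thesis unfolding Tl_def by (simp add: sum.atLeast_Suc_atMost)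
next
  case False
  then show ?thesis unfolding Tl_def by (simp add: bn_gt)
qed

lemma Tl_Suc: "Tl (Suc n) (Suc j) p = p * Tl n j p + (1 - p) * Tl n (Suc j) p"
proof -
  have "Tl (Suc n) (Suc j) p = (\<Sum>k=j..n. bn (Suc n) (Suc k) p)"
    unfolding Tl_def by (rule sum.shift_bounds_cl_Suc_ivl)
  also have "\<dots> = p * Tl n j p + (1 - p) * (\<Sum>k=j..n. bn n (Suc k) p)"
    unfolding Tl_def bn_Suc by (simp add: sum.distrib sum_distrib_left)
  also have "(\<Sum>k=j..n. bn n (Suc k) p) = (\<Sum>k=Suc j..Suc n. bn n k p)"
    by (rule sum.shift_bounds_cl_Suc_ivl[symmetric])
  also have "\<dots> = Tl n (Suc j) p"
  proof (cases "j \<le> n")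
    case True
    then show ?thesis unfolding Tl_def by (simp add: bn_gt)
  next
    case False
    then show ?thesis unfolding Tl_def by simp
  qed
  finally show ?thesis .
qed

lemma Tl_0: "Tl n 0 p = 1"
proof (induction n)
  case 0
  then show ?case by (simp add: Tl_def bn_def)
next
  case (Suc n)
  have "Tl (Suc n) 0 p = bn (Suc n) 0 p + Tl (Suc n) (Suc 0) p" by (rule Tl_step)
  also have "\<dots> = (1 - p) * (bn n 0 p + Tl n 1 p) + p * Tl n 0 p"
    unfolding bn_Suc0 Tl_Suc by (simp add: algebra_simps)
  also have "\<dots> = 1" using Suc Tl_step[of n 0 p] by simp
  finally show ?case .
qed

lemma Tl_nonneg: "0 \<le> p \<Longrightarrow> p \<le> 1 \<Longrightarrow> 0 \<le> Tl n j p"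
  unfolding Tl_def by (intro sum_nonneg bn_nonneg)

lemma Tl_mono: "0 \<le> p \<Longrightarrow> p \<le> p' \<Longrightarrow> p' \<le> 1 \<Longrightarrow> Tl n j p \<le> Tl n j p'"
proof (induction n arbitrary: j)
  case 0
  have "Tl 0 j r = (if j = 0 then 1 else 0)" for r
    by (cases j) (auto simp: Tl_def bn_def)
  then show ?case by simp
next
  case (Suc n)
  show ?case
  proof (cases j)
    case 0
    then show ?thesis by (simp add: Tl_0)
  next
    case (Suc i)
    have a: "Tl n i p \<le> Tl n i p'" and b: "Tl n (Suc i) p \<le> Tl n (Suc i) p'"
      using Suc.IH Suc.prems by auto
    have c: "Tl n (Suc i) p \<le> Tl n i p"
      using Tl_step[of n i p] bn_nonneg[of p n i] Suc.prems by simp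
    have "p * Tl n i p + (1 - p) * Tl n (Suc i) p
        \<le> p' * Tl n i p + (1 - p') * Tl n (Suc i) p"
    proof -
      have "(p' - p) * (Tl n i p - Tl n (Suc i) p) \<ge> 0"
        using c Suc.prems by simp
      then show ?thesis by (simp add: algebra_simps)
    qed
    also have "\<dots> \<le> p' * Tl n i p' + (1 - p') * Tl n (Suc i) p'"
      using a b Suc.prems by (intro add_mono mult_left_mono) auto
    finally show ?thesis unfolding Suc Tl_Suc .
  qed
qed


definition G :: "real \<Rightarrow> nat \<Rightarrow> real \<Rightarrow> real" where
  "G q K p = Tl K (K div 2 + 1) p + (if even K then q * bn K (K div 2) p else 0)"

lemma G_odd: "G q (2*m+1) p = Tl (2*m+1) (m+1) p"
  unfolding G_def by simp

lemma G_even: "G q (2*m) p = q * Tl (2*m) m p + (1 - q) * Tl (2*m) (m+1) p"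
  unfolding G_def using Tl_step[of "2*m" m p] by (simp add: algebra_simps)

lemma sym1: "p * bn (2*m+1) m p = real ((2*m+1) choose m) * (p * (1-p)) ^ (m+1)"
  "(1 - p) * bn (2*m+1) (m+1) p = real ((2*m+1) choose m) * (p * (1-p)) ^ (m+1)"
proof -
  have c: "(2*m+1) choose (m+1) = (2*m+1) choose m"
    using binomial_symmetric[of m "2*m+1"] by simp
  show "p * bn (2*m+1) m p = real ((2*m+1) choose m) * (p * (1-p)) ^ (m+1)"
    unfolding bn_def by (simp add: power_mult_distrib mult_ac)
  show "(1 - p) * bn (2*m+1) (m+1) p = real ((2*m+1) choose m) * (p * (1-p)) ^ (m+1)"
    unfolding bn_def c by (simp add: power_mult_distrib mult_ac)
qed

lemma id_iv: "G q (2*m+2) p - G q (2*m+1) p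
   = q * (p * bn (2*m+1) m p) - (1 - q) * ((1 - p) * bn (2*m+1) (m+1) p)"
proof -
  have e1: "Tl (2*m+2) (m+2) p = p * Tl (2*m+1) (m+1) p + (1-p) * Tl (2*m+1) (m+2) p"
    using Tl_Suc[of "2*m+1" "m+1" p] by simp
  have e2: "Tl (2*m+1) (m+1) p = bn (2*m+1) (m+1) p + Tl (2*m+1) (m+2) p"
    using Tl_step[of "2*m+1" "m+1" p] by simp
  have e3: "bn (2*m+2) (m+1) p = p * bn (2*m+1) m p + (1-p) * bn (2*m+1) (m+1) p"
    using bn_Suc[of "2*m+1" m p] by simp
  have g: "G q (2*m+2) p = Tl (2*m+2) (m+2) p + q * bn (2*m+2) (m+1) p"
    unfolding G_def by simp
  show ?thesis unfolding g G_odd e1 e3 e2 by (simp add: algebra_simps)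
qed

lemma id_v: "G q (2*m) p - G q (2*m+1) p = (q - p) * bn (2*m) m p"
proof -
  have e1: "Tl (2*m+1) (m+1) p = p * Tl (2*m) m p + (1-p) * Tl (2*m) (m+1) p"
    using Tl_Suc[of "2*m" m p] by simp
  have e2: "Tl (2*m) m p = bn (2*m) m p + Tl (2*m) (m+1) p"
    using Tl_step[of "2*m" m p] by simp
  show ?thesis unfolding G_even G_odd e1 e2 by (simp add: algebra_simps)
qed

lemma id_iii_odd: "G q (2*m+3) p - G q (2*m+1) p
   = p * (p * bn (2*m+1) m p) - (1 - p) * ((1 - p) * bn (2*m+1) (m+1) p)"
proof -
  have k3: "2*m+3 = Suc (2*m+2)" by simp
  have g: "G q (Suc (2*m+2)) p = Tl (Suc (2*m+2)) (Suc (m+1)) p"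
    unfolding G_def by simp
  have e1: "Tl (Suc (2*m+2)) (Suc (m+1)) p = p * Tl (2*m+2) (m+1) p + (1-p) * Tl (2*m+2) (m+2) p"
    using Tl_Suc[of "2*m+2" "m+1" p] by simp
  have e2: "Tl (2*m+2) (m+1) p = p * Tl (2*m+1) m p + (1-p) * Tl (2*m+1) (m+1) p"
    using Tl_Suc[of "2*m+1" "m" p] by simp
  have e3: "Tl (2*m+2) (m+2) p = p * Tl (2*m+1) (m+1) p + (1-p) * Tl (2*m+1) (m+2) p"
    using Tl_Suc[of "2*m+1" "m+1" p] by simp
  have e4: "Tl (2*m+1) m p = bn (2*m+1) m p + Tl (2*m+1) (m+1) p"
    using Tl_step[of "2*m+1" "m" p] by simp
  have e5: "Tl (2*m+1) (m+2) p = Tl (2*m+1) (m+1) p - bn (2*m+1) (m+1) p"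
    using Tl_step[of "2*m+1" "m+1" p] by simp
  show ?thesis unfolding k3 g G_odd e1 e2 e3 e4 e5 by (simp add: algebra_simps)
qed


lemma Tl2: "Tl (Suc (Suc N)) (Suc (Suc j)) p = p*(p*Tl N j p + (1-p)*Tl N (Suc j) p)
    + (1-p)*(p*Tl N (Suc j) p + (1-p)*Tl N (Suc (Suc j)) p)"
  unfolding Tl_Suc ..

lemma id_iii_even:
  assumes N: "N = 2*k+2"
  shows "G q (N+2) p - G q N p = q*(p^2 * bn N k p) - (1-q)*((1-p)^2 * bn N (k+2) p)
     + bn N (k+1) p * ((1-q)*p^2 - q*(1-p)^2)"
proof -
  have g1: "G q (N+2) p = q * Tl (Suc (Suc N)) (Suc (Suc k)) p + (1-q) * Tl (Suc (Suc N)) (Suc (Suc (Suc k))) p"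
    using G_even[of q "k+2" p] N by simp
  have g2: "G q N p = q * Tl N (Suc k) p + (1-q) * Tl N (Suc (Suc k)) p"
    using G_even[of q "k+1" p] N by simp
  have u0: "Tl N k p = bn N k p + Tl N (Suc k) p" by (rule Tl_step)
  have u1: "Tl N (Suc k) p = bn N (k+1) p + Tl N (Suc (Suc k)) p" using Tl_step[of N "Suc k" p] by simp
  have u2: "Tl N (Suc (Suc (Suc k))) p = Tl N (Suc (Suc k)) p - bn N (k+2) p" using Tl_step[of N "Suc (Suc k)" p] by simp
  show ?thesis unfolding g1 g2 Tl2 u0 u2 unfolding u1 by (simp add: algebra_simps power2_eq_square)
qed

lemma sym2:
  assumes N: "N = 2*k+2"
  shows "p^2 * bn N k p = real (N choose k) * (p * (1-p)) ^ (k+2)"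
    "(1-p)^2 * bn N (k+2) p = real (N choose k) * (p * (1-p)) ^ (k+2)"
    "bn N (k+1) p = real (N choose (k+1)) * (p * (1-p)) ^ (k+1)"
proof -
  have c: "N choose (k+2) = N choose k"
    using binomial_symmetric[of k N] N by simp
  show "p^2 * bn N k p = real (N choose k) * (p * (1-p)) ^ (k+2)"
    unfolding bn_def N by (simp add: power_mult_distrib mult_ac power2_eq_square)
  show "(1-p)^2 * bn N (k+2) p = real (N choose k) * (p * (1-p)) ^ (k+2)"
    unfolding bn_def c by (simp add: N power_mult_distrib mult_ac power2_eq_square)
  show "bn N (k+1) p = real (N choose (k+1)) * (p * (1-p)) ^ (k+1)"
    unfolding bn_def N by (simp add: power_mult_distrib mult_ac)
qed


lemma W_pos: "0 < p \<Longrightarrow> p < 1 \<Longrightarrow> 0 < real (n choose k) * (p * (1-p)) ^ j \<longleftrightarrow> k \<le> n"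
  by (simp add: zero_less_mult_iff)

lemma L_iv:
  assumes "0 < p" "p < 1" "1/2 < q"
  shows "G q (2*m+1) p < G q (2*m+2) p"
proof -
  define W where "W = real ((2*m+1) choose m) * (p * (1-p)) ^ (m+1)"
  have W: "0 < W" unfolding W_def using W_pos[of p m "2*m+1" "m+1"] assms by simp
  have "G q (2*m+2) p - G q (2*m+1) p = (2*q-1) * W"
    unfolding id_iv sym1 W_def by (simp add: algebra_simps)
  moreover have "(2*q-1) * W > 0" using W assms by simp
  ultimately show ?thesis by linarith
qed

lemma L_v:
  assumes "0 < p" "p < q" "p < 1"
  shows "G q (2*m+1) p < G q (2*m) p"
proof -
  have "0 < bn (2*m) m p" using bn_pos assms by simp
  then have "(q - p) * bn (2*m) m p > 0" using assms by simp
  then show ?thesis using id_v[of q m p] by linarith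
qed

lemma L_iii_odd:
  assumes "0 < p" "p < 1/2"
  shows "G q (2*m+3) p < G q (2*m+1) p"
proof -
  define W where "W = real ((2*m+1) choose m) * (p * (1-p)) ^ (m+1)"
  have W: "0 < W" unfolding W_def using W_pos[of p m "2*m+1" "m+1"] assms by simp
  have "G q (2*m+3) p - G q (2*m+1) p = (2*p-1) * W"
    unfolding id_iii_odd sym1 W_def by (simp add: algebra_simps)
  moreover have "(2*p-1) * W < 0" using W assms by (simp add: mult_neg_pos)
  ultimately show ?thesis by linarith
qed

lemma L_iii_even:
  assumes "0 < p" "p < 1/2" "1/2 < q" "q < 1" "N = 2*k+2"
  shows "G q (N+2) p < G q N p"
proof -
  define c' where "c' = real (N choose k)"
  define c where "c = real (N choose (k+1))"
  define r where "r = p * (1-p)"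
  have r: "0 < r" unfolding r_def using assms by simp
  have cc: "c' \<le> c" unfolding c'_def c_def
    using binomial_less_binomial_Suc[of k N] assms(5) by simp
  have cpos: "0 < c" unfolding c_def using assms(5) zero_less_binomial[of "k+1" N] by linarith
  have d: "G q (N+2) p - G q N p = (2*q-1) * c' * r^(k+2) + c * r^(k+1) * ((1-q)*p^2 - q*(1-p)^2)"
    unfolding id_iii_even[OF assms(5)] sym2[OF assms(5)] c'_def c_def r_def
    by (simp add: algebra_simps)
  have "(2*q-1) * c' * r^(k+2) \<le> (2*q-1) * c * r^(k+2)"
    using cc r assms by (intro mult_right_mono mult_left_mono) auto
  also have "(2*q-1) * c * r^(k+2) = c * r^(k+1) * ((2*q-1) * r)" by (simp add: algebra_simps)
  finally have le: "(2*q-1) * c' * r^(k+2) \<le> c * r^(k+1) * ((2*q-1) * r)" .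
  have br: "(2*q-1) * r + ((1-q)*p^2 - q*(1-p)^2) < 0"
  proof -
    have "(2*q-1) * r + ((1-q)*p^2 - q*(1-p)^2) = -((1-2*p)*(q*(1-2*p)+p))"
      unfolding r_def by (simp add: algebra_simps power2_eq_square)
    moreover have "(1-2*p)*(q*(1-2*p)+p) > 0"
    proof (intro mult_pos_pos)
      show "0 < 1 - 2*p" using assms by simp
      have "0 \<le> q*(1-2*p)" using assms by simp
      then show "0 < q*(1-2*p)+p" using assms by linarith
    qed
    ultimately show ?thesis by linarith
  qed
  have "c * r^(k+1) > 0" using cpos r by simp
  then have "c * r^(k+1) * ((2*q-1) * r + ((1-q)*p^2 - q*(1-p)^2)) < 0"
    using br by (simp add: mult_pos_neg)
  then show ?thesis using d le by (simp add: algebra_simps)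
qed

lemma G_nonneg: "0 \<le> q \<Longrightarrow> 0 \<le> p \<Longrightarrow> p \<le> 1 \<Longrightarrow> 0 \<le> G q K p"
  unfolding G_def using Tl_nonneg bn_nonneg by simp

lemma G_half:
  assumes "1/2 \<le> q" "1/2 \<le> p" "p \<le> 1"
  shows "1/2 \<le> G q K p"
proof -
  have odd: "1/2 \<le> G q (2*m+1) p" for m
  proof (induction m)
    case 0
    then show ?case using assms by (simp add: G_def Tl_def bn_def)
  next
    case (Suc m)
    have "G q (2*m+3) p - G q (2*m+1) p = (2*p-1) * (real ((2*m+1) choose m) * (p * (1-p)) ^ (m+1))"
      unfolding id_iii_odd sym1 by (simp add: algebra_simps)
    moreover have "(2*p-1) * (real ((2*m+1) choose m) * (p * (1-p)) ^ (m+1)) \<ge> 0"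
      using assms by simp
    moreover have "2 * Suc m + 1 = 2*m+3" by simp
    ultimately show ?case using Suc.IH by (metis diff_ge_0_iff_ge order_trans)
  qed
  show ?thesis
  proof (cases "even K")
    case False
    then obtain m where "K = 2*m+1" by (metis oddE)
    then show ?thesis using odd by simp
  next
    case True
    then obtain m where m: "K = 2*m" by blast
    show ?thesis
    proof (cases m)
      case 0
      then show ?thesis using m assms by (simp add: G_def Tl_def bn_def)
    next
      case (Suc j)
      have "G q (2*j+2) p - G q (2*j+1) p = (2*q-1) * (real ((2*j+1) choose j) * (p * (1-p)) ^ (j+1))"
        unfolding id_iv sym1 by (simp add: algebra_simps)
      moreover have "(2*q-1) * (real ((2*j+1) choose j) * (p * (1-p)) ^ (j+1)) \<ge> 0"
        using assms by simp
      moreover have "K = 2*j+2" using m Suc by simp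
      ultimately show ?thesis using odd[of j] by (metis diff_ge_0_iff_ge order_trans)
    qed
  qed
qed

lemma G_mono:
  assumes "0 \<le> q" "q \<le> 1" "0 \<le> p" "p \<le> p'" "p' \<le> 1"
  shows "G q K p \<le> G q K p'"
proof (cases "even K")
  case False
  then obtain m where m: "K = 2*m+1" by (metis oddE)
  show ?thesis unfolding m G_odd using Tl_mono assms by simp
next
  case True
  then obtain m where m: "K = 2*m" by blast
  show ?thesis unfolding m G_even using Tl_mono[OF assms(3-5)] assms(1,2)
    by (intro add_mono mult_left_mono) auto
qed

lemma G_mono_q: "q \<le> q' \<Longrightarrow> 0 \<le> p \<Longrightarrow> p \<le> 1 \<Longrightarrow> G q K p \<le> G q' K p"
  unfolding G_def using bn_nonneg[of p K "K div 2"] by (simp add: mult_right_mono)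

lemma phi_G: "phi_maj q K C l x = (q + real C * G q K (l*x+(1-l)*q)) / (1 + real C)"
proof -
  have S: "{k. K < 2 * k \<and> k \<le> K} = {K div 2 + 1..K}" by auto
  have P: "Pk q K k l x = bn K k (l*x+(1-l)*q)" for k unfolding Pk_def bn_def Let_def ..
  show ?thesis unfolding phi_maj_def G_def S P Tl_def by (simp add: algebra_simps)
qed


lemma phi_cont: "continuous_on UNIV (\<lambda>z. phi_maj q K C (fst z) (snd z))"
  unfolding phi_maj_def Pk_def Let_def
  by (cases "even K") (auto intro!: continuous_intros simp: add_nonneg_eq_0_iff)

lemma phi_cont1: "continuous_on UNIV (\<lambda>l. phi_maj q K C l x)"
  unfolding phi_maj_def Pk_def Let_def
  by (cases "even K") (auto intro!: continuous_intros simp: add_nonneg_eq_0_iff)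

lemma phi_cont2: "continuous_on UNIV (\<lambda>x. phi_maj q K C l x)"
  unfolding phi_maj_def Pk_def Let_def
  by (cases "even K") (auto intro!: continuous_intros simp: add_nonneg_eq_0_iff)

lemma p_range:
  fixes l x q :: real
  assumes "0 \<le> l" "l \<le> 1" "0 \<le> x" "x \<le> q"
  shows "x \<le> l*x+(1-l)*q" "l*x+(1-l)*q \<le> q"
proof -
  have "l*x+(1-l)*q - x = (1-l)*(q-x)" by algebra
  moreover have "(1-l)*(q-x) \<ge> 0" using assms by simp
  ultimately show "x \<le> l*x+(1-l)*q" by linarith
  have "q - (l*x+(1-l)*q) = l*(q-x)" by algebra
  moreover have "l*(q-x) \<ge> 0" using assms by simp
  ultimately show "l*x+(1-l)*q \<le> q" by linarith
qed

lemma phi_pos: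
  assumes "0 < q" "q < 1" "0 \<le> l" "l \<le> 1" "0 \<le> x" "x \<le> 1/2"
  shows "0 < phi_maj q K C l x"
proof -
  have "0 \<le> l*x+(1-l)*q" using assms by simp
  moreover have "l*x+(1-l)*q \<le> l*1+(1-l)*1" using assms
    by (intro add_mono mult_left_mono) auto
  ultimately have "0 \<le> G q K (l*x+(1-l)*q)" using G_nonneg assms by simp
  then show ?thesis unfolding phi_G using assms by (simp add: add_pos_nonneg)
qed

lemma fp:
  assumes "1/2 < q" "q < 1" "1 \<le> C" "0 \<le> l" "l \<le> 1" "0 \<le> x" "x \<le> 1/2"
    and eq: "phi_maj q K C l x = x"
  shows "G q K (l*x+(1-l)*q) < x \<and> 0 < l*x+(1-l)*q \<and> l*x+(1-l)*q < 1/2 \<and> 0 < l"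
proof -
  define p where "p = l*x+(1-l)*q"
  have pr: "x \<le> p" "p \<le> q" unfolding p_def using p_range[of l x q] assms by auto
  have Cp: "0 < real C" using assms by simp
  have "q + real C * G q K p = (1 + real C) * x" using eq unfolding phi_G p_def[symmetric]
    using Cp by (simp add: field_simps)
  then have "real C * (G q K p - x) = x - q" by (simp add: algebra_simps)
  moreover have "x - q < 0" using assms by simp
  ultimately have "real C * (G q K p - x) < 0" by simp
  then have Gx: "G q K p < x" using Cp by (simp add: mult_less_0_iff)
  have "0 \<le> G q K p" using G_nonneg pr assms by simp
  then have x0: "0 < x" using Gx by simp
  have ph: "p < 1/2"
  proof (rule ccontr)
    assume "\<not> p < 1/2"
    then have "1/2 \<le> G q K p" using G_half[of q p K] pr assms by simp
    then show False using Gx assms by simp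
  qed
  have "0 < l"
  proof (rule ccontr)
    assume "\<not> 0 < l"
    then have "l = 0" using assms by simp
    then have "p = q" unfolding p_def by simp
    then show False using ph assms by simp
  qed
  then show ?thesis using Gx x0 pr ph unfolding p_def by simp
qed

definition LS :: "(real \<Rightarrow> real \<Rightarrow> real) \<Rightarrow> ereal" where
  "LS f = (let S = {lam \<in> {0..1}. \<exists>x\<in>{0..1/2}. f lam x = x}
      in if S = {} then \<infinity> else ereal (Inf S))"

lemma lamstar_LS: "lamstar q K C = LS (phi_maj q K C)"
  unfolding lamstar_def LS_def ..

lemma generic:
  fixes fA fB :: "real \<Rightarrow> real \<Rightarrow> real"
  assumes contA: "continuous_on UNIV (\<lambda>z. fA (fst z) (snd z))"
    and contB1: "\<And>x. continuous_on UNIV (\<lambda>l. fB l x)"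
    and contB2: "\<And>l. continuous_on UNIV (\<lambda>x. fB l x)"
    and posB: "\<And>l. 0 \<le> l \<Longrightarrow> l \<le> 1 \<Longrightarrow> 0 < fB l 0"
    and zeroA: "\<And>x. 0 \<le> x \<Longrightarrow> x \<le> 1/2 \<Longrightarrow> fA 0 x \<noteq> x"
    and key: "\<And>l x. 0 \<le> l \<Longrightarrow> l \<le> 1 \<Longrightarrow> 0 \<le> x \<Longrightarrow> x \<le> 1/2 \<Longrightarrow> fA l x = x \<Longrightarrow> fB l x < x"
  shows "LS fB \<le> LS fA \<and> (LS fB \<noteq> \<infinity> \<longrightarrow> LS fB < LS fA)"
proof -
  define SA where "SA = {lam \<in> {0..1}. \<exists>x\<in>{0..1/2}. fA lam x = (x::real)}"
  define SB where "SB = {lam \<in> {0..1}. \<exists>x\<in>{0..1/2}. fB lam x = (x::real)}"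
  have LA: "LS fA = (if SA = {} then \<infinity> else ereal (Inf SA))"
    unfolding LS_def SA_def Let_def ..
  have LB: "LS fB = (if SB = {} then \<infinity> else ereal (Inf SB))"
    unfolding LS_def SB_def Let_def ..
  show ?thesis
  proof (cases "SA = {}")
    case True
    then show ?thesis unfolding LA by (auto simp: top.not_eq_extremum)
  next
    case False
    have SAeq: "SA = fst ` (({0..1} \<times> {0..1/2}) \<inter> {z. fA (fst z) (snd z) = snd z})"
    proof
      show "SA \<subseteq> fst ` (({0..1} \<times> {0..1/2}) \<inter> {z. fA (fst z) (snd z) = snd z})"
      proof
        fix l assume "l \<in> SA"
        then obtain x where "l \<in> {0..1}" "x \<in> {0..1/2}" "fA l x = x" unfolding SA_def by auto
        then show "l \<in> fst ` (({0..1} \<times> {0..1/2}) \<inter> {z. fA (fst z) (snd z) = snd z})"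
          by (intro image_eqI[of _ fst "(l,x)"]) auto
      qed
      show "fst ` (({0..1} \<times> {0..1/2}) \<inter> {z. fA (fst z) (snd z) = snd z}) \<subseteq> SA"
        unfolding SA_def by auto
    qed
    have "closed {z::real\<times>real. fA (fst z) (snd z) = snd z}"
      by (rule closed_Collect_eq[OF contA continuous_on_snd[OF continuous_on_id]])
    then have "compact (({0..1::real} \<times> {0..1/2::real}) \<inter> {z. fA (fst z) (snd z) = snd z})"
      by (intro compact_Int_closed compact_Times compact_Icc)
    then have cA: "compact SA" unfolding SAeq
      by (intro compact_continuous_image continuous_on_fst continuous_on_id)
    have bA: "bdd_below SA" unfolding SA_def by (rule bdd_belowI[of _ 0]) auto
    have "Inf SA \<in> SA" by (rule closed_contains_Inf[OF False bA compact_imp_closed[OF cA]])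
    then obtain x0 where l0: "0 \<le> Inf SA" "Inf SA \<le> 1" and x0: "0 \<le> x0" "x0 \<le> 1/2"
      and fx0: "fA (Inf SA) x0 = x0" unfolding SA_def by auto
    define l0 where "l0 = Inf SA"
    have "Inf SA \<noteq> 0" using zeroA[OF x0] fx0 by auto
    then have l0pos: "0 < l0" using l0 unfolding l0_def by simp
    have kB: "fB l0 x0 < x0" using key[OF l0 x0 fx0] unfolding l0_def .
    have ct: "\<forall>e>0. \<exists>d>0. \<forall>l'. dist l' l0 < d \<longrightarrow> dist (fB l' x0) (fB l0 x0) < e"
      using contB1[of x0] unfolding continuous_on_iff by auto
    have "x0 - fB l0 x0 > 0" using kB by simp
    with ct obtain d where d: "d > 0" "\<And>l. dist l l0 < d \<Longrightarrow> dist (fB l x0) (fB l0 x0) < x0 - fB l0 x0"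
      by blast
    define l1 where "l1 = max 0 (l0 - d/2)"
    have l1: "0 \<le> l1" "l1 < l0" "l1 \<le> 1" unfolding l1_def using l0pos d l0 l0_def by auto
    have "dist l1 l0 < d" unfolding l1_def dist_real_def using d l0pos by auto
    then have "dist (fB l1 x0) (fB l0 x0) < x0 - fB l0 x0" by (rule d(2))
    then have fl1: "fB l1 x0 < x0" unfolding dist_real_def by linarith
    have "\<exists>x\<ge>0. x \<le> x0 \<and> (\<lambda>x. fB l1 x - x) x = 0"
    proof (rule IVT2')
      show "(\<lambda>x. fB l1 x - x) x0 \<le> 0" using fl1 by simp
      show "0 \<le> (\<lambda>x. fB l1 x - x) 0" using posB[OF l1(1) l1(3)] by simp
      show "0 \<le> x0" by fact
      show "continuous_on {0..x0} (\<lambda>x. fB l1 x - x)"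
        by (intro continuous_intros continuous_on_subset[OF contB2]) auto
    qed
    then obtain x1 where "0 \<le> x1" "x1 \<le> x0" "fB l1 x1 = x1" by auto
    then have "l1 \<in> SB" unfolding SB_def using l1 x0 by auto
    moreover have "bdd_below SB" unfolding SB_def by (rule bdd_belowI[of _ 0]) auto
    ultimately have "Inf SB \<le> l1" "SB \<noteq> {}" by (auto intro: cInf_lower)
    then have "LS fB < LS fA" unfolding LA LB using False l1 l0_def by auto
    then show ?thesis by simp
  qed
qed


lemma wrap:
  assumes "1/2 < qA" "qA < 1" "1 \<le> CA" "0 < qB" "qB < 1"
    and key: "\<And>l x. 0 \<le> l \<Longrightarrow> l \<le> 1 \<Longrightarrow> 0 \<le> x \<Longrightarrow> x \<le> 1/2 \<Longrightarrow>
        phi_maj qA KA CA l x = x \<Longrightarrow> phi_maj qB KB CB l x < x"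
  shows "lamstar qA KA CA \<ge> lamstar qB KB CB \<and>
    (lamstar qB KB CB \<noteq> \<infinity> \<longrightarrow> lamstar qA KA CA > lamstar qB KB CB)"
  unfolding lamstar_LS
proof (rule generic[OF phi_cont phi_cont1 phi_cont2])
  show "0 < phi_maj qB KB CB l 0" if "0 \<le> l" "l \<le> 1" for l
    using phi_pos[of qB l 0] that assms by simp
  show "phi_maj qA KA CA 0 x \<noteq> x" if "0 \<le> x" "x \<le> 1/2" for x
    using fp[of qA CA 0 x KA] that assms by auto
  show "phi_maj qB KB CB l x < x" if "0 \<le> l" "l \<le> 1" "0 \<le> x" "x \<le> 1/2" "phi_maj qA KA CA l x = x" for l x
    using key that by blast
qed

lemma key_G:
  assumes "1/2 < q" "q < 1" "1 \<le> C" "0 \<le> l" "l \<le> 1" "0 \<le> x" "x \<le> 1/2"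
    and eq: "phi_maj q KA C l x = x"
    and GG: "\<And>p::real. 0 < p \<Longrightarrow> p < 1/2 \<Longrightarrow> G q KB p < G q KA p"
  shows "phi_maj q KB C l x < x"
proof -
  have f: "0 < l*x+(1-l)*q" "l*x+(1-l)*q < 1/2" using fp[OF assms(1-7) eq] by auto
  have Cp: "0 < real C" using assms by simp
  have "real C * G q KB (l*x+(1-l)*q) < real C * G q KA (l*x+(1-l)*q)"
    using GG[OF f] Cp by simp
  then have "phi_maj q KB C l x < phi_maj q KA C l x"
    unfolding phi_G using Cp by (simp add: divide_strict_right_mono add_pos_pos)
  then show ?thesis using eq by simp
qed

lemma item_i:
  assumes q: "1/2 < q" "q < 1" and C: "1 \<le> C" and qq: "q < q'" "q' < 1"
  shows "lamstar q' K C \<ge> lamstar q K C \<and>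
       (lamstar q K C \<noteq> \<infinity> \<longrightarrow> lamstar q' K C > lamstar q K C)"
proof (rule wrap)
  have Cp: "0 < real C" using C by simp
  show "1/2 < q'" "q' < 1" using q qq by auto
  fix l x :: real
  assume lx: "0 \<le> l" "l \<le> 1" "0 \<le> x" "x \<le> 1/2" and eq: "phi_maj q' K C l x = x"
  define pA where "pA = l*x+(1-l)*q'"
  define pB where "pB = l*x+(1-l)*q"
  have pB0: "0 \<le> pB" unfolding pB_def using lx q by simp
  have pAB: "pB \<le> pA" unfolding pA_def pB_def using lx qq by (simp add: mult_left_mono)
  have pA1: "pA \<le> 1"
  proof -
    have "l*x+(1-l)*q' \<le> l*1+(1-l)*1" using lx qq by (intro add_mono mult_left_mono) auto
    then show ?thesis unfolding pA_def by simp
  qed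
  have "G q K pB \<le> G q K pA" using G_mono[of q pB pA K] q pB0 pAB pA1 by simp
  also have "\<dots> \<le> G q' K pA" using G_mono_q[of q q' pA K] qq pB0 pAB pA1 by simp
  finally have "real C * G q K pB \<le> real C * G q' K pA" using Cp by simp
  then have "q + real C * G q K pB < q' + real C * G q' K pA" using qq by simp
  then have "phi_maj q K C l x < phi_maj q' K C l x"
    unfolding phi_G pA_def[symmetric] pB_def[symmetric] using Cp
    by (simp add: divide_strict_right_mono add_pos_pos)
  then show "phi_maj q K C l x < x" using eq by simp
qed (use q C in auto)

lemma item_ii:
  assumes q: "1/2 < q" "q < 1" and C: "1 \<le> C'" "C' < C"
  shows "lamstar q K C' \<ge> lamstar q K C \<and>
       (lamstar q K C \<noteq> \<infinity> \<longrightarrow> lamstar q K C' > lamstar q K C)"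
proof (rule wrap)
  fix l x :: real
  assume lx: "0 \<le> l" "l \<le> 1" "0 \<le> x" "x \<le> 1/2" and eq: "phi_maj q K C' l x = x"
  define p where "p = l*x+(1-l)*q"
  have Gx: "G q K p < x" using fp[OF q C(1) lx eq] unfolding p_def by simp
  have Cp: "0 < real C'" using C by simp
  have e: "q + real C' * G q K p = (1 + real C') * x" using eq unfolding phi_G p_def[symmetric]
    using Cp by (simp add: field_simps)
  have "(real C - real C') * G q K p < (real C - real C') * x" using Gx C by simp
  then have "q + real C * G q K p < (1 + real C) * x" using e by (simp add: algebra_simps)
  then show "phi_maj q K C l x < x" unfolding phi_G p_def[symmetric]
    by (simp add: field_simps add_pos_pos)
qed (use q C in auto)

lemma item_iii:
  assumes q: "1/2 < q" "q < 1" and C: "1 \<le> C" and K: "2 \<le> K" "2 * C \<le> K - 2"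
  shows "lamstar q (K - 2) C \<ge> lamstar q K C \<and>
       (lamstar q K C \<noteq> \<infinity> \<longrightarrow> lamstar q (K - 2) C > lamstar q K C)"
proof (rule wrap)
  fix l x :: real
  assume lx: "0 \<le> l" "l \<le> 1" "0 \<le> x" "x \<le> 1/2" and eq: "phi_maj q (K-2) C l x = x"
  show "phi_maj q K C l x < x"
  proof (rule key_G[OF q C lx eq])
    fix p :: real assume p: "0 < p" "p < 1/2"
    show "G q K p < G q (K - 2) p"
    proof (cases "even K")
      case True
      then obtain j where j: "K = 2*j" by blast
      with K C have "2 \<le> j" by simp
      then obtain k where "j = k + 2" by (metis add.commute le_Suc_ex)
      then have "K = (2*k+2) + 2" "K - 2 = 2*k+2" using j by auto
      then show ?thesis using L_iii_even[OF p q, of "2*k+2" k] by simp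
    next
      case False
      then obtain j where j: "K = 2*j+1" by (metis oddE)
      with K C have "1 \<le> j" by simp
      then obtain m where "j = m + 1" by (metis add.commute le_Suc_ex)
      then have "K = 2*m+3" "K - 2 = 2*m+1" using j by auto
      then show ?thesis using L_iii_odd[OF p, of q m] by simp
    qed
  qed
qed (use q C in auto)

lemma item_iv:
  assumes q: "1/2 < q" "q < 1" and C: "1 \<le> C" and K: "odd K"
  shows "lamstar q (K + 1) C \<ge> lamstar q K C \<and>
       (lamstar q K C \<noteq> \<infinity> \<longrightarrow> lamstar q (K + 1) C > lamstar q K C)"
proof (rule wrap)
  fix l x :: real
  assume lx: "0 \<le> l" "l \<le> 1" "0 \<le> x" "x \<le> 1/2" and eq: "phi_maj q (K+1) C l x = x"
  show "phi_maj q K C l x < x"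
  proof (rule key_G[OF q C lx eq])
    fix p :: real assume p: "0 < p" "p < 1/2"
    obtain m where m: "K = 2*m+1" using K by (metis oddE)
    then have "K + 1 = 2*m+2" by simp
    then show "G q K p < G q (K + 1) p" using L_iv[of p q m] p q m by simp
  qed
qed (use q C in auto)

lemma item_v:
  assumes q: "1/2 < q" "q < 1" and C: "1 \<le> C" and K: "odd K"
  shows "lamstar q (K - 1) C \<ge> lamstar q K C \<and>
       (lamstar q K C \<noteq> \<infinity> \<longrightarrow> lamstar q (K - 1) C > lamstar q K C)"
proof (rule wrap)
  fix l x :: real
  assume lx: "0 \<le> l" "l \<le> 1" "0 \<le> x" "x \<le> 1/2" and eq: "phi_maj q (K-1) C l x = x"
  show "phi_maj q K C l x < x"
  proof (rule key_G[OF q C lx eq])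
    fix p :: real assume p: "0 < p" "p < 1/2"
    obtain m where m: "K = 2*m+1" using K by (metis oddE)
    then have "K - 1 = 2*m" by simp
    then show "G q K p < G q (K - 1) p" using L_v[of p q m] p q m by simp
  qed
qed (use q C in auto)

theorem proposition4:
  fixes q q' :: real and K C C' :: nat
  assumes q: "1/2 < q" "q < 1"
    and C: "1 \<le> C" "2 * C \<le> K"
  shows
   "(q < q' \<and> q' < 1 \<longrightarrow>
       lamstar q' K C \<ge> lamstar q K C \<and>
       (lamstar q K C \<noteq> \<infinity> \<longrightarrow> lamstar q' K C > lamstar q K C))
  \<and> (1 \<le> C' \<and> C' < C \<longrightarrow>
       lamstar q K C' \<ge> lamstar q K C \<and>
       (lamstar q K C \<noteq> \<infinity> \<longrightarrow> lamstar q K C' > lamstar q K C))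
  \<and> (2 \<le> K \<and> 2 * C \<le> K - 2 \<longrightarrow>
       lamstar q (K - 2) C \<ge> lamstar q K C \<and>
       (lamstar q K C \<noteq> \<infinity> \<longrightarrow> lamstar q (K - 2) C > lamstar q K C))
  \<and> (odd K \<longrightarrow>
       lamstar q (K + 1) C \<ge> lamstar q K C \<and>
       (lamstar q K C \<noteq> \<infinity> \<longrightarrow> lamstar q (K + 1) C > lamstar q K C))
  \<and> (odd K \<longrightarrow>
       lamstar q (K - 1) C \<ge> lamstar q K C \<and>
       (lamstar q K C \<noteq> \<infinity> \<longrightarrow> lamstar q (K - 1) C > lamstar q K C))"
  using item_i[OF q C(1), of q'] item_ii[OF q, of C' C K] item_iii[OF q C(1), of K]
    item_iv[OF q C(1), of K] item_v[OF q C(1), of K]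
  by blast

end
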